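(* For any partition $\lambda$ with at most $n$ parts and $x=(x_1,\dots,x_n)\in\mathbb{C}^n$, $$W_{\lambda}(x_1^{-1},\dots,x_n^{-1};q^{-1},p,t^{-1},a^{-1},b^{-1})=a^{-2|\lambda|}b^{2|\lambda|}q^{2|\lambda|}t^{2n(\lambda)-2(n-1)|\lambda|}\,W_{\lambda}(x_1,\dots,x_n;q,p,t,a,b),$$ where $|\lambda|=\sum_i\lambda_i$ and $n(\lambda)=\sum_i(i-1)\lambda_i$.
   Context: Fix $|p|<1$; parameters generic. $E(x)=(x;p)_\infty(p/x;p)_\infty$. For integer $m\ge0$, $(a)_m=(a;q,p)_m=\prod_{k=0}^{m-1}E(aq^k)$, for $m<0$, $(a)_m=1/(aq^m)_{-m}$; for a partition $\lambda$ with $n$ parts $(a)_\lambda=\prod_{i=1}^n(at^{1-i})_{\lambda_i}$; several arguments denote products; integer subscripts denote the single-integer symbol. When $W$ is evaluated with $q,t$ replaced by $q^{-1},t^{-1}$, all these symbols are formed with base $q^{-1}$ and $t^{-1}$. For $n$-part partitions with $\lambda_1\ge\mu_1\ge\dots\ge\lambda_n\ge\mu_n$, $\lambda_{n+1}=\mu_{n+1}=0$, $H_{\lambda/\mu}(q,p,t,b)=\prod_{1\le i<j\le n}\Big\{\frac{(q^{\mu_i-\mu_{j-1}}t^{j-i})_{\mu_{j-1}-\lambda_j}(q^{\lambda_i+\lambda_j}t^{3-j-i}b)_{\mu_{j-1}-\lambda_j}}{(q^{\mu_i-\mu_{j-1}+1}t^{j-i-1})_{\mu_{j-1}-\lambda_j}(q^{\lambda_i+\lambda_j+1}t^{2-j-i}b)_{\mu_{j-1}-\lambda_j}}\frac{(q^{\lambda_i-\mu_{j-1}+1}t^{j-i-1})_{\mu_{j-1}-\lambda_j}}{(q^{\lambda_i-\mu_{j-1}}t^{j-i})_{\mu_{j-1}-\lambda_j}}\Big\}\prod_{1\le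 i<j-1\le n}\frac{(q^{\mu_i+\lambda_j+1}t^{1-j-i}b)_{\mu_{j-1}-\lambda_j}}{(q^{\mu_i+\lambda_j}t^{2-j-i}b)_{\mu_{j-1}-\lambda_j}}$; for $x\in\mathbb{C}$, $W_{\lambda/\mu}(x;q,p,t,a,b)=H_{\lambda/\mu}\frac{(x^{-1},ax)_\lambda(qbx/t,qb/(axt))_\mu}{(x^{-1},ax)_\mu(qbx,qb/(ax))_\lambda}\prod_{i=1}^n\frac{E(bt^{1-2i}q^{2\mu_i})}{E(bt^{1-2i})}\frac{(bt^{1-2i})_{\mu_i+\lambda_{i+1}}}{(bqt^{-2i})_{\mu_i+\lambda_{i+1}}}t^{i(\mu_i-\lambda_{i+1})}$ (zero if the interlacing fails); recursively $W_{\lambda/\mu}(y,z_1,\dots,z_\ell;q,p,t,a,b)=\sum_\nu W_{\lambda/\nu}(yt^{-\ell};q,p,t,at^{2\ell},bt^\ell)W_{\nu/\mu}(z_1,\dots,z_\ell;q,p,t,a,b)$ over $\nu$ with $\lambda_1\ge\nu_1\ge\dots\ge\lambda_n\ge\nu_n\ge0$; $W_\lambda=W_{\lambda/0}$. *)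

theory Defs
  imports "HOL-Analysis.Analysis"
begin

definition qpinf :: "complex \<Rightarrow> complex \<Rightarrow> complex" where
  "qpinf x p = prodinf (\<lambda>k. 1 - x * p ^ k)"

definition Eth :: "complex \<Rightarrow> complex \<Rightarrow> complex" where
  "Eth p x = qpinf x p * qpinf (p / x) p"

definition ell :: "complex \<Rightarrow> complex \<Rightarrow> complex \<Rightarrow> int \<Rightarrow> complex" where
  "ell q p a m =
     (if 0 \<le> m then (\<Prod>k<nat m. Eth p (a * q ^ k))
      else 1 / (\<Prod>k<nat (- m). Eth p (a * q powi (m + int k))))"

definition npart :: "nat \<Rightarrow> (nat \<Rightarrow> nat) \<Rightarrow> bool" where
  "npart n la = ((\<forall>i. (i = 0 \<or> n < i) \<longrightarrow> la i = 0) \<and> (\<forall>i. 1 \<le> i \<and> i < n \<longrightarrow> la (Suc i) \<le> la i))"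

definition interlace :: "nat \<Rightarrow> (nat \<Rightarrow> nat) \<Rightarrow> (nat \<Rightarrow> nat) \<Rightarrow> bool" where
  "interlace n la mu = (npart n la \<and> (\<forall>i. (i = 0 \<or> n < i) \<longrightarrow> mu i = 0) \<and>
      (\<forall>i. 1 \<le> i \<and> i \<le> n \<longrightarrow> la (Suc i) \<le> mu i \<and> mu i \<le> la i))"

definition ellp :: "nat \<Rightarrow> complex \<Rightarrow> complex \<Rightarrow> complex \<Rightarrow> complex \<Rightarrow> (nat \<Rightarrow> nat) \<Rightarrow> complex" where
  "ellp n q p t a la = (\<Prod>i\<in>{1..n}. ell q p (a * t powi (1 - int i)) (int (la i)))"

definition Hfac :: "nat \<Rightarrow> complex \<Rightarrow> complex \<Rightarrow> complex \<Rightarrow> complex \<Rightarrow> (nat \<Rightarrow> nat) \<Rightarrow> (nat \<Rightarrow> nat) \<Rightarrow> complex" where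
  "Hfac n q p t b la mu =
    (\<Prod>i\<in>{1..n}. \<Prod>j\<in>{i+1..n}.
       (let L = (\<lambda>k. int (la k)); M = (\<lambda>k. int (mu k)); I = int i; J = int j;
            d = M (j - 1) - L j
        in ell q p (q powi (M i - M (j - 1)) * t powi (J - I)) d
           * ell q p (q powi (L i + L j) * t powi (3 - J - I) * b) d
           / (ell q p (q powi (M i - M (j - 1) + 1) * t powi (J - I - 1)) d
              * ell q p (q powi (L i + L j + 1) * t powi (2 - J - I) * b) d)
           * ell q p (q powi (L i - M (j - 1) + 1) * t powi (J - I - 1)) d
           / ell q p (q powi (L i - M (j - 1)) * t powi (J - I)) d))
   * (\<Prod>i\<in>{1..n}. \<Prod>j\<in>{i+2..n+1}.
       (let L = (\<lambda>k. int (la k)); M = (\<lambda>k. int (mu k)); I = int i; J = int j;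
            d = M (j - 1) - L j
        in ell q p (q powi (M i + L j + 1) * t powi (1 - J - I) * b) d
           / ell q p (q powi (M i + L j) * t powi (2 - J - I) * b) d))"

definition W1 :: "nat \<Rightarrow> complex \<Rightarrow> complex \<Rightarrow> complex \<Rightarrow> complex \<Rightarrow> complex \<Rightarrow> (nat \<Rightarrow> nat) \<Rightarrow> (nat \<Rightarrow> nat) \<Rightarrow> complex \<Rightarrow> complex" where
  "W1 n q p t a b la mu x =
    (if interlace n la mu then
       Hfac n q p t b la mu
       * ellp n q p t (inverse x) la * ellp n q p t (a * x) la
       * ellp n q p t (q * b * x / t) mu * ellp n q p t (q * b / (a * x * t)) mu
       / (ellp n q p t (inverse x) mu * ellp n q p t (a * x) mu
          * ellp n q p t (q * b * x) la * ellp n q p t (q * b / (a * x)) la)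
       * (\<Prod>i\<in>{1..n}.
           Eth p (b * t powi (1 - 2 * int i) * q powi (2 * int (mu i))) / Eth p (b * t powi (1 - 2 * int i))
           * ell q p (b * t powi (1 - 2 * int i)) (int (mu i) + int (la (Suc i)))
           / ell q p (b * q * t powi (- 2 * int i)) (int (mu i) + int (la (Suc i)))
           * t powi (int i * (int (mu i) - int (la (Suc i)))))
     else 0)"

fun Wl :: "nat \<Rightarrow> complex \<Rightarrow> complex \<Rightarrow> complex \<Rightarrow> complex \<Rightarrow> complex \<Rightarrow> complex list \<Rightarrow> (nat \<Rightarrow> nat) \<Rightarrow> (nat \<Rightarrow> nat) \<Rightarrow> complex" where
  "Wl n q p t a b [] la mu = (if la = mu then 1 else 0)"
| "Wl n q p t a b (y # zs) la mu =
     (\<Sum>nu\<in>{nu. interlace n la nu}.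
        W1 n q p t (a * t ^ (2 * length zs)) (b * t ^ length zs) la nu (y * t powi (- int (length zs)))
        * Wl n q p t a b zs nu mu)"

definition generic :: "complex \<Rightarrow> complex \<Rightarrow> complex \<Rightarrow> complex \<Rightarrow> complex \<Rightarrow> complex list \<Rightarrow> bool" where
  "generic p q t a b xs =
    (q \<noteq> 0 \<and> t \<noteq> 0 \<and> a \<noteq> 0 \<and> b \<noteq> 0 \<and> (\<forall>x\<in>set xs. x \<noteq> 0) \<and>
     (\<forall>(k::int) (l::int) (\<alpha>::int) (\<beta>::int) (\<gamma>::nat \<Rightarrow> int) (m::int).
        (k \<noteq> 0 \<or> l \<noteq> 0 \<or> \<alpha> \<noteq> 0 \<or> \<beta> \<noteq> 0 \<or> (\<exists>i<length xs. \<gamma> i \<noteq> 0)) \<longrightarrow>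
        q powi k * t powi l * a powi \<alpha> * b powi \<beta> * (\<Prod>i<length xs. (xs ! i) powi \<gamma> i) \<noteq> p powi m))"

end

theory Submission
  imports Defs
begin


lemma qpinf_conv:
  fixes x p :: complex
  assumes "norm p < 1"
  shows "convergent_prod (\<lambda>k. 1 - x * p ^ k)"
proof -
  have "summable (\<lambda>k. norm (x * p ^ k))"
  proof -
    have "summable (\<lambda>k. norm x * norm p ^ k)"
      by (intro summable_mult summable_geometric) (simp add: assms)
    moreover have "(\<lambda>k. norm (x * p ^ k)) = (\<lambda>k. norm x * norm p ^ k)"
      by (simp add: norm_mult norm_power)
    ultimately show ?thesis by simp
  qed
  then have "summable (\<lambda>k. norm ((1 - x * p ^ k) - 1))" by simp
  then show ?thesis
    by (intro abs_convergent_prod_imp_convergent_prod summable_imp_abs_convergent_prod)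
qed

lemma qpinf_shift:
  assumes "norm p < 1"
  shows "qpinf x p = (1 - x) * qpinf (p * x) p"
proof -
  have "(\<lambda>k. 1 - x * p ^ k) has_prod ((\<Prod>k<1. 1 - x * p ^ k) * (\<Prod>k. 1 - x * p ^ (k + 1)))"
    using has_prod_ignore_initial_segment'[OF qpinf_conv[OF assms]] by blast
  then have "qpinf x p = (1 - x) * (\<Prod>k. 1 - x * p ^ (k + 1))"
    unfolding qpinf_def by (simp add: has_prod_unique[symmetric])
  also have "(\<lambda>k. 1 - x * p ^ (k + 1)) = (\<lambda>k. 1 - (p * x) * p ^ k)"
    by (simp add: algebra_simps)
  finally show ?thesis unfolding qpinf_def by simp
qed

lemma Eth_inv:
  assumes "norm p < 1" "y \<noteq> 0"
  shows "Eth p (inverse y) = - inverse y * Eth p y"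
proof -
  have 1: "qpinf (inverse y) p = (1 - inverse y) * qpinf (p / y) p"
    using qpinf_shift[OF assms(1), of "inverse y"] by (simp add: divide_inverse mult.commute)
  have 2: "qpinf y p = (1 - y) * qpinf (p * y) p"
    using qpinf_shift[OF assms(1)] .
  have 3: "p / inverse y = p * y" by (simp add: divide_inverse)
  show ?thesis unfolding Eth_def 1 2 3 using assms(2)
    by (simp add: field_simps)
qed

definition hh :: "complex \<Rightarrow> complex \<Rightarrow> nat \<Rightarrow> complex" where
  "hh q c m = (\<Prod>k<m. - inverse (c * q ^ k))"

lemma hh_nz: "q \<noteq> 0 \<Longrightarrow> c \<noteq> 0 \<Longrightarrow> hh q c m \<noteq> 0"
  unfolding hh_def by (simp add: prod_zero_iff)

lemma hh_scale: "hh q (c * s) m = hh q c m * inverse s ^ m"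
proof -
  have "hh q (c * s) m = (\<Prod>k<m. - inverse (c * q ^ k) * inverse s)"
    unfolding hh_def by (intro prod.cong) (auto simp: field_simps)
  also have "\<dots> = hh q c m * inverse s ^ m"
    unfolding hh_def prod.distrib by simp
  finally show ?thesis .
qed

lemma ell_inv:
  assumes "norm p < 1" "q \<noteq> 0" "c \<noteq> 0"
  shows "ell (inverse q) p (inverse c) (int m) = hh q c m * ell q p c (int m)"
proof -
  have "ell (inverse q) p (inverse c) (int m) = (\<Prod>k<m. Eth p (inverse (c * q ^ k)))"
    unfolding ell_def by (simp add: power_inverse)
  also have "\<dots> = (\<Prod>k<m. - inverse (c * q ^ k) * Eth p (c * q ^ k))"
    using assms by (intro prod.cong refl Eth_inv) auto
  also have "\<dots> = hh q c m * ell q p c (int m)"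
    unfolding hh_def ell_def prod.distrib by simp
  finally show ?thesis .
qed

lemma powi_succ: "(x::complex) \<noteq> 0 \<Longrightarrow> k = j + 1 \<Longrightarrow> x powi k = x powi j * x"
  by (simp add: power_int_add_1)

lemma Hterm1:
  assumes p: "norm p < 1" and nz: "q \<noteq> 0" "t \<noteq> 0" "b \<noteq> 0"
  shows "ell (inverse q) p ((inverse q) powi A * (inverse t) powi (J - I)) (int m)
       * ell (inverse q) p ((inverse q) powi B * (inverse t) powi (3 - J - I) * inverse b) (int m)
       / (ell (inverse q) p ((inverse q) powi (A + 1) * (inverse t) powi (J - I - 1)) (int m)
          * ell (inverse q) p ((inverse q) powi (B + 1) * (inverse t) powi (2 - J - I) * inverse b) (int m))
       * ell (inverse q) p ((inverse q) powi (C + 1) * (inverse t) powi (J - I - 1)) (int m)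
       / ell (inverse q) p ((inverse q) powi C * (inverse t) powi (J - I)) (int m)
     = (q / t) ^ m *
       (ell q p (q powi A * t powi (J - I)) (int m)
       * ell q p (q powi B * t powi (3 - J - I) * b) (int m)
       / (ell q p (q powi (A + 1) * t powi (J - I - 1)) (int m)
          * ell q p (q powi (B + 1) * t powi (2 - J - I) * b) (int m))
       * ell q p (q powi (C + 1) * t powi (J - I - 1)) (int m)
       / ell q p (q powi C * t powi (J - I)) (int m))"
proof -
  define c1 where "c1 = q powi A * t powi (J - I - 1)"
  define c2 where "c2 = q powi B * t powi (2 - J - I) * b"
  define c5 where "c5 = q powi C * t powi (J - I - 1)"
  have e1: "q powi A * t powi (J - I) = c1 * t"
    unfolding c1_def using nz by (simp add: powi_succ[of t "J - I" "J - I - 1"])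
  have e2: "q powi B * t powi (3 - J - I) * b = c2 * t"
    unfolding c2_def using nz by (simp add: powi_succ[of t "3 - J - I" "2 - J - I"])
  have e3: "q powi (A + 1) * t powi (J - I - 1) = c1 * q"
    unfolding c1_def using nz by (simp add: power_int_add_1)
  have e4: "q powi (B + 1) * t powi (2 - J - I) * b = c2 * q"
    unfolding c2_def using nz by (simp add: power_int_add_1)
  have e5: "q powi (C + 1) * t powi (J - I - 1) = c5 * q"
    unfolding c5_def using nz by (simp add: power_int_add_1)
  have e6: "q powi C * t powi (J - I) = c5 * t"
    unfolding c5_def using nz by (simp add: powi_succ[of t "J - I" "J - I - 1"])
  have nzc: "c1 \<noteq> 0" "c2 \<noteq> 0" "c5 \<noteq> 0" unfolding c1_def c2_def c5_def using nz by auto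
  have iv: "\<And>x y. inverse (x::complex) * inverse y = inverse (x * y)" by simp
  have hnz: "hh q c1 m \<noteq> 0" "hh q c2 m \<noteq> 0" "hh q c5 m \<noteq> 0" using hh_nz nz nzc by auto
  have tq: "inverse q ^ m \<noteq> 0" "inverse t ^ m \<noteq> 0" using nz by auto
  have EI: "\<And>c. c \<noteq> 0 \<Longrightarrow> ell (inverse q) p (inverse c) (int m) = hh q c m * ell q p c (int m)"
    using ell_inv p nz(1) by blast
  have F0: "ell (inverse q) p (inverse (c1 * t)) (int m) = hh q (c1 * t) m * ell q p (c1 * t) (int m)"
    using EI[of "c1 * t"] nz nzc by simp
  have F1: "ell (inverse q) p (inverse (c2 * t)) (int m) = hh q (c2 * t) m * ell q p (c2 * t) (int m)"
    using EI[of "c2 * t"] nz nzc by simp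
  have F2: "ell (inverse q) p (inverse (c1 * q)) (int m) = hh q (c1 * q) m * ell q p (c1 * q) (int m)"
    using EI[of "c1 * q"] nz nzc by simp
  have F3: "ell (inverse q) p (inverse (c2 * q)) (int m) = hh q (c2 * q) m * ell q p (c2 * q) (int m)"
    using EI[of "c2 * q"] nz nzc by simp
  have F4: "ell (inverse q) p (inverse (c5 * q)) (int m) = hh q (c5 * q) m * ell q p (c5 * q) (int m)"
    using EI[of "c5 * q"] nz nzc by simp
  have F5: "ell (inverse q) p (inverse (c5 * t)) (int m) = hh q (c5 * t) m * ell q p (c5 * t) (int m)"
    using EI[of "c5 * t"] nz nzc by simp
  show ?thesis
    unfolding power_int_inverse iv e1 e2 e3 e4 e5 e6 F0 F1 F2 F3 F4 F5 hh_scale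
    using nz nzc hnz tq
    by (simp add: field_simps)
qed

lemma Hterm2:
  assumes p: "norm p < 1" and nz: "q \<noteq> 0" "t \<noteq> 0" "b \<noteq> 0"
  shows "ell (inverse q) p ((inverse q) powi (A + 1) * (inverse t) powi (1 - J - I) * inverse b) (int m)
       / ell (inverse q) p ((inverse q) powi A * (inverse t) powi (2 - J - I) * inverse b) (int m)
     = (t / q) ^ m *
       (ell q p (q powi (A + 1) * t powi (1 - J - I) * b) (int m)
       / ell q p (q powi A * t powi (2 - J - I) * b) (int m))"
proof -
  define c1 where "c1 = q powi A * t powi (1 - J - I) * b"
  have e1: "q powi (A + 1) * t powi (1 - J - I) * b = c1 * q"
    unfolding c1_def using nz by (simp add: power_int_add_1)
  have e2: "q powi A * t powi (2 - J - I) * b = c1 * t"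
    unfolding c1_def using nz by (simp add: powi_succ[of t "2 - J - I" "1 - J - I"])
  have nzc: "c1 \<noteq> 0" unfolding c1_def using nz by auto
  have iv: "\<And>x y. inverse (x::complex) * inverse y = inverse (x * y)" by simp
  have hnz: "hh q c1 m \<noteq> 0" using hh_nz nz nzc by auto
  have tq: "inverse q ^ m \<noteq> 0" "inverse t ^ m \<noteq> 0" using nz by auto
  have EI: "\<And>c. c \<noteq> 0 \<Longrightarrow> ell (inverse q) p (inverse c) (int m) = hh q c m * ell q p c (int m)"
    using ell_inv p nz(1) by blast
  have F0: "ell (inverse q) p (inverse (c1 * q)) (int m) = hh q (c1 * q) m * ell q p (c1 * q) (int m)"
    using EI[of "c1 * q"] nz nzc by simp
  have F1: "ell (inverse q) p (inverse (c1 * t)) (int m) = hh q (c1 * t) m * ell q p (c1 * t) (int m)"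
    using EI[of "c1 * t"] nz nzc by simp
  show ?thesis
    unfolding power_int_inverse iv e1 e2 F0 F1 hh_scale
    using nz nzc hnz tq
    by (simp add: field_simps)
qed

lemma Hfac_term1:
  assumes p: "norm p < 1" and nz: "q \<noteq> 0" "t \<noteq> 0" "b \<noteq> 0" and le: "la j \<le> mu (j - 1)"
  shows "(let L = (\<lambda>k. int (la k)); M = (\<lambda>k. int (mu k)); I = int i; J = int j;
            d = M (j - 1) - L j
        in ell (inverse q) p ((inverse q) powi (M i - M (j - 1)) * (inverse t) powi (J - I)) d
           * ell (inverse q) p ((inverse q) powi (L i + L j) * (inverse t) powi (3 - J - I) * inverse b) d
           / (ell (inverse q) p ((inverse q) powi (M i - M (j - 1) + 1) * (inverse t) powi (J - I - 1)) d
              * ell (inverse q) p ((inverse q) powi (L i + L j + 1) * (inverse t) powi (2 - J - I) * inverse b) d)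
           * ell (inverse q) p ((inverse q) powi (L i - M (j - 1) + 1) * (inverse t) powi (J - I - 1)) d
           / ell (inverse q) p ((inverse q) powi (L i - M (j - 1)) * (inverse t) powi (J - I)) d) = (q / t) ^ (mu (j - 1) - la j) * (let L = (\<lambda>k. int (la k)); M = (\<lambda>k. int (mu k)); I = int i; J = int j;
            d = M (j - 1) - L j
        in ell q p (q powi (M i - M (j - 1)) * t powi (J - I)) d
           * ell q p (q powi (L i + L j) * t powi (3 - J - I) * b) d
           / (ell q p (q powi (M i - M (j - 1) + 1) * t powi (J - I - 1)) d
              * ell q p (q powi (L i + L j + 1) * t powi (2 - J - I) * b) d)
           * ell q p (q powi (L i - M (j - 1) + 1) * t powi (J - I - 1)) d
           / ell q p (q powi (L i - M (j - 1)) * t powi (J - I)) d)"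
proof -
  have e: "int (mu (j - 1)) - int (la j) = int (mu (j - 1) - la j)" using le by simp
  show ?thesis unfolding Let_def e by (rule Hterm1[OF p nz])
qed

lemma Hfac_term2:
  assumes p: "norm p < 1" and nz: "q \<noteq> 0" "t \<noteq> 0" "b \<noteq> 0" and le: "la j \<le> mu (j - 1)"
  shows "(let L = (\<lambda>k. int (la k)); M = (\<lambda>k. int (mu k)); I = int i; J = int j;
            d = M (j - 1) - L j
        in ell (inverse q) p ((inverse q) powi (M i + L j + 1) * (inverse t) powi (1 - J - I) * inverse b) d
           / ell (inverse q) p ((inverse q) powi (M i + L j) * (inverse t) powi (2 - J - I) * inverse b) d) = (t / q) ^ (mu (j - 1) - la j) * (let L = (\<lambda>k. int (la k)); M = (\<lambda>k. int (mu k)); I = int i; J = int j;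
            d = M (j - 1) - L j
        in ell q p (q powi (M i + L j + 1) * t powi (1 - J - I) * b) d
           / ell q p (q powi (M i + L j) * t powi (2 - J - I) * b) d)"
proof -
  have e: "int (mu (j - 1)) - int (la j) = int (mu (j - 1) - la j)" using le by simp
  show ?thesis unfolding Let_def e by (rule Hterm2[OF p nz])
qed

lemma Hfac_inv:
  assumes p: "norm p < 1" and nz: "q \<noteq> 0" "t \<noteq> 0" "b \<noteq> 0" and il: "interlace n la mu"
  shows "Hfac n (inverse q) p (inverse t) (inverse b) la mu
    = (q / t) ^ (\<Sum>i\<in>{1..n}. \<Sum>j\<in>{i+1..n}. mu (j - 1) - la j)
      * (t / q) ^ (\<Sum>i\<in>{1..n}. \<Sum>j\<in>{i+2..n+1}. mu (j - 1) - la j)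
      * Hfac n q p t b la mu"
proof -
  have le: "la j \<le> mu (j - 1)" if "2 \<le> j" "j \<le> n + 1" for j
  proof -
    have "\<forall>i. 1 \<le> i \<and> i \<le> n \<longrightarrow> la (Suc i) \<le> mu i" using il by (simp add: interlace_def)
    moreover have "1 \<le> j - 1 \<and> j - 1 \<le> n" using that by arith
    ultimately have "la (Suc (j - 1)) \<le> mu (j - 1)" by blast
    moreover have "Suc (j - 1) = j" using that by arith
    ultimately show ?thesis by simp
  qed
  have A1: "(\<Prod>i\<in>{1..n}. \<Prod>j\<in>{i+1..n}. (let L = (\<lambda>k. int (la k)); M = (\<lambda>k. int (mu k)); I = int i; J = int j;
            d = M (j - 1) - L j
        in ell (inverse q) p ((inverse q) powi (M i - M (j - 1)) * (inverse t) powi (J - I)) d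
           * ell (inverse q) p ((inverse q) powi (L i + L j) * (inverse t) powi (3 - J - I) * inverse b) d
           / (ell (inverse q) p ((inverse q) powi (M i - M (j - 1) + 1) * (inverse t) powi (J - I - 1)) d
              * ell (inverse q) p ((inverse q) powi (L i + L j + 1) * (inverse t) powi (2 - J - I) * inverse b) d)
           * ell (inverse q) p ((inverse q) powi (L i - M (j - 1) + 1) * (inverse t) powi (J - I - 1)) d
           / ell (inverse q) p ((inverse q) powi (L i - M (j - 1)) * (inverse t) powi (J - I)) d))
    = (\<Prod>i\<in>{1..n}. \<Prod>j\<in>{i+1..n}. (q / t) ^ (mu (j - 1) - la j) * (let L = (\<lambda>k. int (la k)); M = (\<lambda>k. int (mu k)); I = int i; J = int j;
            d = M (j - 1) - L j
        in ell q p (q powi (M i - M (j - 1)) * t powi (J - I)) d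
           * ell q p (q powi (L i + L j) * t powi (3 - J - I) * b) d
           / (ell q p (q powi (M i - M (j - 1) + 1) * t powi (J - I - 1)) d
              * ell q p (q powi (L i + L j + 1) * t powi (2 - J - I) * b) d)
           * ell q p (q powi (L i - M (j - 1) + 1) * t powi (J - I - 1)) d
           / ell q p (q powi (L i - M (j - 1)) * t powi (J - I)) d))"
    by (intro prod.cong refl Hfac_term1[OF p nz] le) auto
  have A2: "(\<Prod>i\<in>{1..n}. \<Prod>j\<in>{i+2..n+1}. (let L = (\<lambda>k. int (la k)); M = (\<lambda>k. int (mu k)); I = int i; J = int j;
            d = M (j - 1) - L j
        in ell (inverse q) p ((inverse q) powi (M i + L j + 1) * (inverse t) powi (1 - J - I) * inverse b) d
           / ell (inverse q) p ((inverse q) powi (M i + L j) * (inverse t) powi (2 - J - I) * inverse b) d))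
    = (\<Prod>i\<in>{1..n}. \<Prod>j\<in>{i+2..n+1}. (t / q) ^ (mu (j - 1) - la j) * (let L = (\<lambda>k. int (la k)); M = (\<lambda>k. int (mu k)); I = int i; J = int j;
            d = M (j - 1) - L j
        in ell q p (q powi (M i + L j + 1) * t powi (1 - J - I) * b) d
           / ell q p (q powi (M i + L j) * t powi (2 - J - I) * b) d))"
    by (intro prod.cong refl Hfac_term2[OF p nz] le) auto
  show ?thesis
    unfolding Hfac_def A1 A2 prod.distrib power_sum
    by (simp only: mult_ac)
qed



definition hp :: "nat \<Rightarrow> complex \<Rightarrow> complex \<Rightarrow> complex \<Rightarrow> (nat \<Rightarrow> nat) \<Rightarrow> complex" where
  "hp n q t c la = (\<Prod>i\<in>{1..n}. hh q (c * t powi (1 - int i)) (la i))"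

lemma ellp_inv:
  assumes p: "norm p < 1" and nz: "q \<noteq> 0" "t \<noteq> 0" "c \<noteq> 0"
  shows "ellp n (inverse q) p (inverse t) (inverse c) la = hp n q t c la * ellp n q p t c la"
proof -
  have "ellp n (inverse q) p (inverse t) (inverse c) la
      = (\<Prod>i\<in>{1..n}. ell (inverse q) p (inverse (c * t powi (1 - int i))) (int (la i)))"
    unfolding ellp_def by (simp add: power_int_inverse)
  also have "\<dots> = (\<Prod>i\<in>{1..n}. hh q (c * t powi (1 - int i)) (la i) * ell q p (c * t powi (1 - int i)) (int (la i)))"
    using nz by (intro prod.cong refl ell_inv[OF p]) auto
  also have "\<dots> = hp n q t c la * ellp n q p t c la"
    unfolding hp_def ellp_def prod.distrib ..
  finally show ?thesis .
qed

lemma hp_scale: "hp n q t c la = hp n q t 1 la * inverse c ^ (\<Sum>i\<in>{1..n}. la i)"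
proof -
  have "hp n q t c la = (\<Prod>i\<in>{1..n}. hh q (1 * t powi (1 - int i)) (la i) * inverse c ^ la i)"
    unfolding hp_def by (intro prod.cong refl) (metis hh_scale mult.commute mult_1)
  then show ?thesis unfolding hp_def prod.distrib power_sum by simp
qed

lemma hp_nz: "q \<noteq> 0 \<Longrightarrow> t \<noteq> 0 \<Longrightarrow> hp n q t 1 la \<noteq> 0"
  unfolding hp_def by (auto simp: hh_nz)

definition mon :: "complex \<Rightarrow> complex \<Rightarrow> complex \<Rightarrow> complex \<Rightarrow> int \<Rightarrow> int \<Rightarrow> int \<Rightarrow> int \<Rightarrow> complex" where
  "mon q t a b e1 e2 e3 e4 = q powi e1 * t powi e2 * a powi e3 * b powi e4"

lemma mon_mult:
  assumes "q \<noteq> 0" "t \<noteq> 0" "a \<noteq> 0" "b \<noteq> 0"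
  shows "mon q t a b e1 e2 e3 e4 * mon q t a b f1 f2 f3 f4 = mon q t a b (e1 + f1) (e2 + f2) (e3 + f3) (e4 + f4)"
  unfolding mon_def using assms by (simp add: power_int_add ac_simps)

lemma mon_pow: "mon q t a b e1 e2 e3 e4 ^ m = mon q t a b (int m * e1) (int m * e2) (int m * e3) (int m * e4)"
  unfolding mon_def by (simp add: power_mult_distrib power_int_power' ac_simps)

lemma mon_prod:
  assumes "q \<noteq> 0" "t \<noteq> 0" "a \<noteq> 0" "b \<noteq> 0"
  shows "(\<Prod>i\<in>S. mon q t a b (f1 i) (f2 i) (f3 i) (f4 i))
       = mon q t a b (\<Sum>i\<in>S. f1 i) (\<Sum>i\<in>S. f2 i) (\<Sum>i\<in>S. f3 i) (\<Sum>i\<in>S. f4 i)"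
proof (induction S rule: infinite_finite_induct)
  case (infinite A) then show ?case by (simp add: mon_def)
next
  case empty then show ?case by (simp add: mon_def)
next
  case (insert x F) then show ?case by (simp add: mon_mult[OF assms])
qed

lemma mon_nz: "q \<noteq> 0 \<Longrightarrow> t \<noteq> 0 \<Longrightarrow> a \<noteq> 0 \<Longrightarrow> b \<noteq> 0 \<Longrightarrow> mon q t a b e1 e2 e3 e4 \<noteq> 0"
  unfolding mon_def by simp

lemma Lterm:
  assumes p: "norm p < 1" and nz: "q \<noteq> 0" "t \<noteq> 0" "B \<noteq> 0" "A \<noteq> 0"
  shows "Eth p (inverse B * inverse t powi (1 - 2 * int i) * inverse q powi (2 * int mi)) / Eth p (inverse B * inverse t powi (1 - 2 * int i))
           * ell (inverse q) p (inverse B * inverse t powi (1 - 2 * int i)) (int mi + int l)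
           / ell (inverse q) p (inverse B * inverse q * inverse t powi (- 2 * int i)) (int mi + int l)
           * inverse t powi (int i * (int mi - int l))
       = mon q t A B (int (mi + l) - 2 * int mi) (- int (mi + l) - 2 * (int i * (int mi - int l))) 0 0
         * (Eth p (B * t powi (1 - 2 * int i) * q powi (2 * int mi)) / Eth p (B * t powi (1 - 2 * int i))
           * ell q p (B * t powi (1 - 2 * int i)) (int mi + int l)
           / ell q p (B * q * t powi (- 2 * int i)) (int mi + int l)
           * t powi (int i * (int mi - int l)))"
proof -
  define c where "c = B * t powi (1 - 2 * int i)"
  define k where "k = int i * (int mi - int l)"
  define m where "m = mi + l"
  have cnz: "c \<noteq> 0" using nz unfolding c_def by simp
  have tt: "t powi (1 - 2 * int i) = t powi (- 2 * int i) * t" by (rule powi_succ) (use nz in auto)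
  have c2: "B * q * t powi (- 2 * int i) = c * (q / t)"
    unfolding c_def tt using nz by (simp add: field_simps)
  have iv: "\<And>x y. inverse (x::complex) * inverse y = inverse (x * y)" by simp
  have E1: "Eth p (inverse (c * q powi (2 * int mi))) = - inverse (c * q powi (2 * int mi)) * Eth p (c * q powi (2 * int mi))"
    by (rule Eth_inv[OF p]) (use cnz nz in simp)
  have E2: "Eth p (inverse c) = - inverse c * Eth p c"
    using Eth_inv[OF p] cnz by simp
  have F1: "ell (inverse q) p (inverse c) (int m) = hh q c m * ell q p c (int m)"
    using ell_inv[OF p] cnz nz by simp
  have F2: "ell (inverse q) p (inverse (c * (q / t))) (int m) = hh q (c * (q / t)) m * ell q p (c * (q / t)) (int m)"
    by (rule ell_inv[OF p]) (use cnz nz in simp_all)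
  have mm: "int mi + int l = int m" unfolding m_def by simp
  have mon: "mon q t A B (int m - 2 * int mi) (- int m - 2 * k) 0 0 = q ^ m * inverse (q powi (2 * int mi)) * inverse (t ^ m) * inverse (t powi k) * inverse (t powi k)"
  proof -
    have ex: "- int m - 2 * k = (- int m + - k) + - k" by simp
    have t1: "t powi (- int m - 2 * k) = t powi (- int m) * t powi (-k) * t powi (-k)"
    proof -
      have a1: "t powi ((- int m + - k) + - k) = t powi (- int m + - k) * t powi (-k)"
        by (rule power_int_add) (use nz in simp)
      have a2: "t powi (- int m + - k) = t powi (- int m) * t powi (-k)"
        by (rule power_int_add) (use nz in simp)
      show ?thesis unfolding ex a1 a2 ..
    qed
    have q1: "q powi (int m - 2 * int mi) = q ^ m / q powi (2 * int mi)"
      using nz by (simp add: power_int_diff)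
    show ?thesis unfolding mon_def t1 q1 power_int_minus by (simp add: field_simps)
  qed
  have hnz: "hh q c m \<noteq> 0" using hh_nz nz cnz by auto
  have LHS: "Eth p (inverse B * inverse t powi (1 - 2 * int i) * inverse q powi (2 * int mi)) = Eth p (inverse (c * q powi (2 * int mi)))"
    "Eth p (inverse B * inverse t powi (1 - 2 * int i)) = Eth p (inverse c)"
    "ell (inverse q) p (inverse B * inverse t powi (1 - 2 * int i)) (int mi + int l) = ell (inverse q) p (inverse c) (int m)"
    "inverse t powi (int i * (int mi - int l)) = inverse (t powi k)"
    unfolding c_def k_def mm c2[symmetric] by (simp_all add: power_int_inverse)
  have g4: "inverse B * inverse q * inverse t powi (- 2 * int i) = inverse (c * (q / t))"
    unfolding c2[symmetric] by (simp add: power_int_inverse)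
  have LHS4: "ell (inverse q) p (inverse B * inverse q * inverse t powi (- 2 * int i)) (int mi + int l) = ell (inverse q) p (inverse (c * (q / t))) (int m)"
    unfolding g4 mm ..
  have RHS: "Eth p (B * t powi (1 - 2 * int i) * q powi (2 * int mi)) = Eth p (c * q powi (2 * int mi))"
    "Eth p (B * t powi (1 - 2 * int i)) = Eth p c"
    "ell q p (B * t powi (1 - 2 * int i)) (int mi + int l) = ell q p c (int m)"
    "t powi (int i * (int mi - int l)) = t powi k"
    unfolding c_def k_def mm c2[symmetric] by simp_all
  have RHS4: "ell q p (B * q * t powi (- 2 * int i)) (int mi + int l) = ell q p (c * (q / t)) (int m)"
    unfolding c2 mm ..
  show ?thesis
  proof (cases "Eth p c = 0 \<or> ell q p (c * (q / t)) (int m) = 0")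
    case True then show ?thesis unfolding LHS LHS4 RHS4 RHS E1 E2 F1 F2 hh_scale m_def[symmetric] k_def[symmetric] unfolding mon by auto
  next
    case False
    then show ?thesis unfolding LHS LHS4 RHS4 RHS E1 E2 F1 F2 hh_scale m_def[symmetric] k_def[symmetric] unfolding mon using nz cnz hnz by (simp add: field_simps)
  qed
qed



lemma S12g:
  fixes d :: "nat \<Rightarrow> nat"
  shows "(\<Sum>i\<in>{1..Suc m}. \<Sum>j\<in>{i+1..Suc m}. d j) + m * d (m + 2)
       = (\<Sum>i\<in>{1..Suc m}. \<Sum>j\<in>{i+2..Suc m+1}. d j) + (\<Sum>j\<in>{2..Suc m}. d j)"
proof (induction m)
  case 0 then show ?case by simp
next
  case (Suc m)
  have a: "(\<Sum>i\<in>{1..Suc (Suc m)}. \<Sum>j\<in>{i+1..Suc (Suc m)}. d j)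
      = (\<Sum>i\<in>{1..Suc m}. \<Sum>j\<in>{i+1..Suc m}. d j) + (Suc m) * d (Suc (Suc m))"
  proof -
    have "(\<Sum>i\<in>{1..Suc (Suc m)}. \<Sum>j\<in>{i+1..Suc (Suc m)}. d j)
        = (\<Sum>i\<in>{1..Suc m}. \<Sum>j\<in>{i+1..Suc (Suc m)}. d j)"
      by (simp add: sum.cl_ivl_Suc[of _ 1 "Suc m"])
    also have "\<dots> = (\<Sum>i\<in>{1..Suc m}. (\<Sum>j\<in>{i+1..Suc m}. d j) + d (Suc (Suc m)))"
      by (intro sum.cong refl) (simp add: sum.cl_ivl_Suc[of _ _ "Suc m"])
    also have "\<dots> = (\<Sum>i\<in>{1..Suc m}. \<Sum>j\<in>{i+1..Suc m}. d j) + (Suc m) * d (Suc (Suc m))"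
      by (simp add: sum.distrib)
    finally show ?thesis .
  qed
  have b: "(\<Sum>i\<in>{1..Suc (Suc m)}. \<Sum>j\<in>{i+2..Suc (Suc m)+1}. d j)
      = (\<Sum>i\<in>{1..Suc m}. \<Sum>j\<in>{i+2..Suc m+1}. d j) + (Suc m) * d (Suc (Suc m) + 1)"
  proof -
    have "(\<Sum>i\<in>{1..Suc (Suc m)}. \<Sum>j\<in>{i+2..Suc (Suc m)+1}. d j)
        = (\<Sum>i\<in>{1..Suc m}. \<Sum>j\<in>{i+2..Suc (Suc m)+1}. d j)"
      by (simp add: sum.cl_ivl_Suc[of _ 1 "Suc m"])
    also have "\<dots> = (\<Sum>i\<in>{1..Suc m}. (\<Sum>j\<in>{i+2..Suc m+1}. d j) + d (Suc (Suc m) + 1))"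
      by (intro sum.cong refl) (simp add: sum.cl_ivl_Suc[of _ _ "Suc (Suc m)"])
    also have "\<dots> = (\<Sum>i\<in>{1..Suc m}. \<Sum>j\<in>{i+2..Suc m+1}. d j) + (Suc m) * d (Suc (Suc m) + 1)"
      by (simp add: sum.distrib)
    finally show ?thesis .
  qed
  have c: "(\<Sum>j\<in>{2..Suc (Suc m)}. d j) = (\<Sum>j\<in>{2..Suc m}. d j) + d (Suc (Suc m))"
    by (simp add: sum.cl_ivl_Suc[of _ 2 "Suc m"])
  show ?case unfolding a b c using Suc.IH by (simp add: algebra_simps)
qed

lemma S12:
  fixes d :: "nat \<Rightarrow> nat"
  assumes "d (Suc n) = 0"
  shows "(\<Sum>i\<in>{1..n}. \<Sum>j\<in>{i+1..n}. d j) = (\<Sum>i\<in>{1..n}. \<Sum>j\<in>{i+2..n+1}. d j) + (\<Sum>j\<in>{2..n}. d j)"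
proof (cases n)
  case 0 then show ?thesis by simp
next
  case (Suc m)
  then show ?thesis using S12g[of d m] assms by (simp add: numeral_2_eq_2)
qed

lemma shift_diff:
  fixes g1 g2 :: "nat \<Rightarrow> int"
  shows "(\<Sum>j\<in>{2..Suc n}. g1 (j - 1) - g2 j) = (\<Sum>i\<in>{1..n}. g1 i - g2 (Suc i))"
  by (induction n) (simp_all add: sum.cl_ivl_Suc)

lemma shift_mult:
  fixes g :: "nat \<Rightarrow> nat"
  shows "(\<Sum>i\<in>{1..n}. i * g (Suc i)) = (\<Sum>i\<in>{1..Suc n}. (i - 1) * g i)"
  by (induction n) (simp_all add: sum.cl_ivl_Suc)



lemma assemble:
  fixes PH Hf H K a1 a2 a3 a4 b1 b2 b3 b4 E1 E2 E3 E4 F1 F2 F3 F4 M Q R :: complex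
  assumes "H \<noteq> 0" "K \<noteq> 0" "R = PH * (a1 * a2 / (a3 * a4)) * (b1 * b2 / (b3 * b4)) * M"
    "a3 \<noteq> 0" "a4 \<noteq> 0" "b3 \<noteq> 0" "b4 \<noteq> 0"
  shows "PH * Hf * (H * a1 * E1) * (H * a2 * E2) * (K * b1 * F1) * (K * b2 * F2)
     / (K * b3 * F3 * (K * b4 * F4) * (H * a3 * E3) * (H * a4 * E4)) * (M * Q)
   = R * (Hf * E1 * E2 * F1 * F2 / (F3 * F4 * E3 * E4) * Q)"
proof (cases "E3 = 0 \<or> E4 = 0 \<or> F3 = 0 \<or> F4 = 0")
  case True then show ?thesis by auto
next
  case False then show ?thesis using assms by (simp add: field_simps)
qed

lemma pow4: "(a::complex) ^ n * b ^ n / (c ^ n * d ^ n) = (a * b / (c * d)) ^ n"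
  by (simp add: power_mult_distrib power_divide)

lemma mon_cong: "e1 = f1 \<Longrightarrow> e2 = f2 \<Longrightarrow> e3 = f3 \<Longrightarrow> e4 = f4 \<Longrightarrow> mon q t a b e1 e2 e3 e4 = mon q t a b f1 f2 f3 f4"
  by simp

lemma exps:
  assumes il: "interlace n la mu" and mun: "mu n = 0"
  shows "int (\<Sum>i\<in>{1..n}. \<Sum>j\<in>{i+1..n}. mu (j - 1) - la j)
       = int (\<Sum>i\<in>{1..n}. \<Sum>j\<in>{i+2..n+1}. mu (j - 1) - la j)
         + (\<Sum>i\<in>{1..n}. int (mu i)) - (\<Sum>i\<in>{1..n}. int (la (Suc i)))"
    and "(\<Sum>i\<in>{1..n}. int i * int (la (Suc i))) = (\<Sum>i\<in>{1..n}. int (i - 1) * int (la i))"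
    and "(\<Sum>i\<in>{1..n}. int i * int (mu i)) = (\<Sum>i\<in>{1..n}. int (i - 1) * int (mu i)) + (\<Sum>i\<in>{1..n}. int (mu i))"
proof -
  have lan: "la (Suc n) = 0" using il unfolding interlace_def npart_def by simp
  have le: "la j \<le> mu (j - 1)" if "2 \<le> j" "j \<le> n + 1" for j
  proof -
    have "\<forall>i. 1 \<le> i \<and> i \<le> n \<longrightarrow> la (Suc i) \<le> mu i" using il by (simp add: interlace_def)
    moreover have "1 \<le> j - 1 \<and> j - 1 \<le> n" using that by arith
    ultimately have "la (Suc (j - 1)) \<le> mu (j - 1)" by blast
    moreover have "Suc (j - 1) = j" using that by arith
    ultimately show ?thesis by simp
  qed
  have T: "int (\<Sum>j\<in>{2..n}. mu (j - 1) - la j) = (\<Sum>i\<in>{1..n}. int (mu i)) - (\<Sum>i\<in>{1..n}. int (la (Suc i)))"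
  proof -
    have "int (\<Sum>j\<in>{2..n}. mu (j - 1) - la j) = (\<Sum>j\<in>{2..n}. int (mu (j - 1)) - int (la j))"
      unfolding of_nat_sum using le by (intro sum.cong refl) (auto simp: of_nat_diff)
    also have "\<dots> = (\<Sum>j\<in>{2..Suc n}. int (mu (j - 1)) - int (la j))"
      using mun lan by (simp add: sum.cl_ivl_Suc[of _ 2 n])
    also have "\<dots> = (\<Sum>i\<in>{1..n}. int (mu i) - int (la (Suc i)))"
      by (rule shift_diff)
    finally show ?thesis by (simp add: sum_subtractf)
  qed
  show "int (\<Sum>i\<in>{1..n}. \<Sum>j\<in>{i+1..n}. mu (j - 1) - la j)
       = int (\<Sum>i\<in>{1..n}. \<Sum>j\<in>{i+2..n+1}. mu (j - 1) - la j)
         + (\<Sum>i\<in>{1..n}. int (mu i)) - (\<Sum>i\<in>{1..n}. int (la (Suc i)))"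
    using S12[of "\<lambda>j. mu (j - 1) - la j" n] mun lan T by simp
  have "(\<Sum>i\<in>{1..n}. i * la (Suc i)) = (\<Sum>i\<in>{1..n}. (i - 1) * la i)"
    using shift_mult[of la n] lan by (simp add: sum.cl_ivl_Suc[of _ 1 n])
  then have "int (\<Sum>i\<in>{1..n}. i * la (Suc i)) = int (\<Sum>i\<in>{1..n}. (i - 1) * la i)" by simp
  then show "(\<Sum>i\<in>{1..n}. int i * int (la (Suc i))) = (\<Sum>i\<in>{1..n}. int (i - 1) * int (la i))"
    unfolding of_nat_sum of_nat_mult .
  have "(\<Sum>i\<in>{1..n}. int i * int (mu i)) = (\<Sum>i\<in>{1..n}. int (i - 1) * int (mu i) + int (mu i))"
    by (intro sum.cong refl) (auto simp: of_nat_diff algebra_simps)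
  then show "(\<Sum>i\<in>{1..n}. int i * int (mu i)) = (\<Sum>i\<in>{1..n}. int (i - 1) * int (mu i)) + (\<Sum>i\<in>{1..n}. int (mu i))"
    by (simp add: sum.distrib)
qed



lemma W1_inv:
  assumes p: "norm p < 1" and nz: "q \<noteq> 0" "t \<noteq> 0" "A \<noteq> 0" "B \<noteq> 0" "X \<noteq> 0" and mun: "mu n = 0"
  shows "W1 n (inverse q) p (inverse t) (inverse A) (inverse B) la mu (inverse X)
   = mon q t A B (2 * int (\<Sum>i\<in>{1..n}. la i) - 2 * int (\<Sum>i\<in>{1..n}. mu i))
        (2 * int (\<Sum>i\<in>{1..n}. (i - 1) * la i) - 2 * int (\<Sum>i\<in>{1..n}. (i - 1) * mu i) - 2 * int (\<Sum>i\<in>{1..n}. mu i))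
        (- 2 * (int (\<Sum>i\<in>{1..n}. la i) - int (\<Sum>i\<in>{1..n}. mu i))) (2 * (int (\<Sum>i\<in>{1..n}. la i) - int (\<Sum>i\<in>{1..n}. mu i))) * W1 n q p t A B la mu X"
proof (cases "interlace n la mu")
  case False then show ?thesis by (simp add: W1_def)
next
  case il: True
  note Hf = Hfac_inv[OF p nz(1,2,4) il]
  have L1: "ellp n (inverse q) p (inverse t) (inverse (inverse X)) la = hp n q t (inverse X) la * ellp n q p t (inverse X) la"
    by (rule ellp_inv[OF p nz(1,2)]) (use nz in simp)
  have L2: "ellp n (inverse q) p (inverse t) (inverse A * inverse X) la = hp n q t (A * X) la * ellp n q p t (A * X) la"
  proof -
    have e: "inverse A * inverse X = inverse (A * X)" using nz by (simp add: field_simps)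
    show ?thesis unfolding e by (rule ellp_inv[OF p nz(1,2)]) (use nz in simp)
  qed
  have L3: "ellp n (inverse q) p (inverse t) (inverse q * inverse B * inverse X / inverse t) mu = hp n q t (q * B * X / t) mu * ellp n q p t (q * B * X / t) mu"
  proof -
    have e: "inverse q * inverse B * inverse X / inverse t = inverse (q * B * X / t)" using nz by (simp add: field_simps)
    show ?thesis unfolding e by (rule ellp_inv[OF p nz(1,2)]) (use nz in simp)
  qed
  have L4: "ellp n (inverse q) p (inverse t) (inverse q * inverse B / (inverse A * inverse X * inverse t)) mu = hp n q t (q * B / (A * X * t)) mu * ellp n q p t (q * B / (A * X * t)) mu"
  proof -
    have e: "inverse q * inverse B / (inverse A * inverse X * inverse t) = inverse (q * B / (A * X * t))" using nz by (simp add: field_simps)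
    show ?thesis unfolding e by (rule ellp_inv[OF p nz(1,2)]) (use nz in simp)
  qed
  have L5: "ellp n (inverse q) p (inverse t) (inverse (inverse X)) mu = hp n q t (inverse X) mu * ellp n q p t (inverse X) mu"
    by (rule ellp_inv[OF p nz(1,2)]) (use nz in simp)
  have L6: "ellp n (inverse q) p (inverse t) (inverse A * inverse X) mu = hp n q t (A * X) mu * ellp n q p t (A * X) mu"
  proof -
    have e: "inverse A * inverse X = inverse (A * X)" using nz by (simp add: field_simps)
    show ?thesis unfolding e by (rule ellp_inv[OF p nz(1,2)]) (use nz in simp)
  qed
  have L7: "ellp n (inverse q) p (inverse t) (inverse q * inverse B * inverse X) la = hp n q t (q * B * X) la * ellp n q p t (q * B * X) la"
  proof -
    have e: "inverse q * inverse B * inverse X = inverse (q * B * X)" using nz by (simp add: field_simps)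
    show ?thesis unfolding e by (rule ellp_inv[OF p nz(1,2)]) (use nz in simp)
  qed
  have L8: "ellp n (inverse q) p (inverse t) (inverse q * inverse B / (inverse A * inverse X)) la = hp n q t (q * B / (A * X)) la * ellp n q p t (q * B / (A * X)) la"
  proof -
    have e: "inverse q * inverse B / (inverse A * inverse X) = inverse (q * B / (A * X))" using nz by (simp add: field_simps)
    show ?thesis unfolding e by (rule ellp_inv[OF p nz(1,2)]) (use nz in simp)
  qed
  have Q: "(\<Prod>i\<in>{1..n}. Eth p (inverse B * inverse t powi (1 - 2 * int i) * inverse q powi (2 * int (mu i))) / Eth p (inverse B * inverse t powi (1 - 2 * int i))
           * ell (inverse q) p (inverse B * inverse t powi (1 - 2 * int i)) (int (mu i) + int (la (Suc i)))
           / ell (inverse q) p (inverse B * inverse q * inverse t powi (- 2 * int i)) (int (mu i) + int (la (Suc i)))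
           * inverse t powi (int i * (int (mu i) - int (la (Suc i)))))
     = mon q t A B (\<Sum>i\<in>{1..n}. int (mu i + la (Suc i)) - 2 * int (mu i)) (\<Sum>i\<in>{1..n}. - int (mu i + la (Suc i)) - 2 * (int i * (int (mu i) - int (la (Suc i))))) 0 0 * (\<Prod>i\<in>{1..n}. Eth p (B * t powi (1 - 2 * int i) * q powi (2 * int (mu i))) / Eth p (B * t powi (1 - 2 * int i))
           * ell q p (B * t powi (1 - 2 * int i)) (int (mu i) + int (la (Suc i)))
           / ell q p (B * q * t powi (- 2 * int i)) (int (mu i) + int (la (Suc i)))
           * t powi (int i * (int (mu i) - int (la (Suc i)))))"
  proof -
    have "(\<Prod>i\<in>{1..n}. Eth p (inverse B * inverse t powi (1 - 2 * int i) * inverse q powi (2 * int (mu i))) / Eth p (inverse B * inverse t powi (1 - 2 * int i))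
           * ell (inverse q) p (inverse B * inverse t powi (1 - 2 * int i)) (int (mu i) + int (la (Suc i)))
           / ell (inverse q) p (inverse B * inverse q * inverse t powi (- 2 * int i)) (int (mu i) + int (la (Suc i)))
           * inverse t powi (int i * (int (mu i) - int (la (Suc i)))))
      = (\<Prod>i\<in>{1..n}. mon q t A B (int (mu i + la (Suc i)) - 2 * int (mu i)) (- int (mu i + la (Suc i)) - 2 * (int i * (int (mu i) - int (la (Suc i))))) 0 0 * (Eth p (B * t powi (1 - 2 * int i) * q powi (2 * int (mu i))) / Eth p (B * t powi (1 - 2 * int i))
           * ell q p (B * t powi (1 - 2 * int i)) (int (mu i) + int (la (Suc i)))
           / ell q p (B * q * t powi (- 2 * int i)) (int (mu i) + int (la (Suc i)))
           * t powi (int i * (int (mu i) - int (la (Suc i))))))"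
      by (intro prod.cong refl Lterm[OF p nz(1,2,4,3)])
    then show ?thesis unfolding prod.distrib mon_prod[OF nz(1-4)] by simp
  qed
  have G1: "inverse (inverse X) ^ (\<Sum>i\<in>{1..n}. la i) * inverse (A * X) ^ (\<Sum>i\<in>{1..n}. la i) / (inverse (q * B * X) ^ (\<Sum>i\<in>{1..n}. la i) * inverse (q * B / (A * X)) ^ (\<Sum>i\<in>{1..n}. la i))
      = mon q t A B (2 * int (\<Sum>i\<in>{1..n}. la i)) 0 (- 2 * int (\<Sum>i\<in>{1..n}. la i)) (2 * int (\<Sum>i\<in>{1..n}. la i))"
  proof -
    have "inverse (inverse X) * inverse (A * X) / (inverse (q * B * X) * inverse (q * B / (A * X))) = mon q t A B 2 0 (-2) 2"
      unfolding mon_def using nz by (simp add: field_simps power_int_minus power2_eq_square)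
    note b = this
    show ?thesis unfolding pow4 b mon_pow by (simp add: ac_simps)
  qed
  have G2: "inverse (q * B * X / t) ^ (\<Sum>i\<in>{1..n}. mu i) * inverse (q * B / (A * X * t)) ^ (\<Sum>i\<in>{1..n}. mu i) / (inverse (inverse X) ^ (\<Sum>i\<in>{1..n}. mu i) * inverse (A * X) ^ (\<Sum>i\<in>{1..n}. mu i))
      = mon q t A B (- 2 * int (\<Sum>i\<in>{1..n}. mu i)) (2 * int (\<Sum>i\<in>{1..n}. mu i)) (2 * int (\<Sum>i\<in>{1..n}. mu i)) (- 2 * int (\<Sum>i\<in>{1..n}. mu i))"
  proof -
    have "inverse (q * B * X / t) * inverse (q * B / (A * X * t)) / (inverse (inverse X) * inverse (A * X)) = mon q t A B (-2) 2 2 (-2)"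
      unfolding mon_def using nz by (simp add: field_simps power_int_minus power2_eq_square)
    note b = this
    show ?thesis unfolding pow4 b mon_pow by (simp add: ac_simps)
  qed
  have P1: "(q / t) ^ (\<Sum>i\<in>{1..n}. \<Sum>j\<in>{i+1..n}. mu (j - 1) - la j) = mon q t A B (int (\<Sum>i\<in>{1..n}. \<Sum>j\<in>{i+1..n}. mu (j - 1) - la j)) (- int (\<Sum>i\<in>{1..n}. \<Sum>j\<in>{i+1..n}. mu (j - 1) - la j)) 0 0"
  proof -
    have "q / t = mon q t A B 1 (-1) 0 0" unfolding mon_def by (simp add: power_int_minus divide_inverse)
    note b = this
    show ?thesis unfolding b mon_pow by simp
  qed
  have P2: "(t / q) ^ (\<Sum>i\<in>{1..n}. \<Sum>j\<in>{i+2..n+1}. mu (j - 1) - la j) = mon q t A B (- int (\<Sum>i\<in>{1..n}. \<Sum>j\<in>{i+2..n+1}. mu (j - 1) - la j)) (int (\<Sum>i\<in>{1..n}. \<Sum>j\<in>{i+2..n+1}. mu (j - 1) - la j)) 0 0"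
  proof -
    have "t / q = mon q t A B (-1) 1 0 0" unfolding mon_def by (simp add: power_int_minus divide_inverse)
    note b = this
    show ?thesis unfolding b mon_pow by simp
  qed
  note ex = exps[OF il mun]
  have R: "mon q t A B (2 * int (\<Sum>i\<in>{1..n}. la i) - 2 * int (\<Sum>i\<in>{1..n}. mu i))
        (2 * int (\<Sum>i\<in>{1..n}. (i - 1) * la i) - 2 * int (\<Sum>i\<in>{1..n}. (i - 1) * mu i) - 2 * int (\<Sum>i\<in>{1..n}. mu i))
        (- 2 * (int (\<Sum>i\<in>{1..n}. la i) - int (\<Sum>i\<in>{1..n}. mu i))) (2 * (int (\<Sum>i\<in>{1..n}. la i) - int (\<Sum>i\<in>{1..n}. mu i))) = (q / t) ^ (\<Sum>i\<in>{1..n}. \<Sum>j\<in>{i+1..n}. mu (j - 1) - la j) * (t / q) ^ (\<Sum>i\<in>{1..n}. \<Sum>j\<in>{i+2..n+1}. mu (j - 1) - la j)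
      * (inverse (inverse X) ^ (\<Sum>i\<in>{1..n}. la i) * inverse (A * X) ^ (\<Sum>i\<in>{1..n}. la i) / (inverse (q * B * X) ^ (\<Sum>i\<in>{1..n}. la i) * inverse (q * B / (A * X)) ^ (\<Sum>i\<in>{1..n}. la i)))
      * (inverse (q * B * X / t) ^ (\<Sum>i\<in>{1..n}. mu i) * inverse (q * B / (A * X * t)) ^ (\<Sum>i\<in>{1..n}. mu i) / (inverse (inverse X) ^ (\<Sum>i\<in>{1..n}. mu i) * inverse (A * X) ^ (\<Sum>i\<in>{1..n}. mu i)))
      * mon q t A B (\<Sum>i\<in>{1..n}. int (mu i + la (Suc i)) - 2 * int (mu i)) (\<Sum>i\<in>{1..n}. - int (mu i + la (Suc i)) - 2 * (int i * (int (mu i) - int (la (Suc i))))) 0 0"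
  proof -
    have d1: "(\<Sum>i\<in>{1..n}. int (mu i + la (Suc i)) - 2 * int (mu i))
        = (\<Sum>i\<in>{1..n}. int (la (Suc i))) - (\<Sum>i\<in>{1..n}. int (mu i))"
      by (simp add: sum_subtractf[symmetric])
    have d2: "(\<Sum>i\<in>{1..n}. - int (mu i + la (Suc i)) - 2 * (int i * (int (mu i) - int (la (Suc i)))))
        = 2 * (\<Sum>i\<in>{1..n}. int i * int (la (Suc i))) - 2 * (\<Sum>i\<in>{1..n}. int i * int (mu i))
          - (\<Sum>i\<in>{1..n}. int (la (Suc i))) - (\<Sum>i\<in>{1..n}. int (mu i))"
      by (simp add: sum_subtractf[symmetric] sum_distrib_left algebra_simps sum.distrib[symmetric])
    have c1: "int (\<Sum>i\<in>{1..n}. (i - 1) * la i) = (\<Sum>i\<in>{1..n}. int (i - 1) * int (la i))"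
      unfolding of_nat_sum of_nat_mult ..
    have c2: "int (\<Sum>i\<in>{1..n}. (i - 1) * mu i) = (\<Sum>i\<in>{1..n}. int (i - 1) * int (mu i))"
      unfolding of_nat_sum of_nat_mult ..
    have c3: "int (\<Sum>i\<in>{1..n}. mu i) = (\<Sum>i\<in>{1..n}. int (mu i))"
      unfolding of_nat_sum ..
    show ?thesis
      unfolding G1 G2 P1 P2 mon_mult[OF nz(1-4)]
      apply (rule mon_cong)
      using ex d1 d2 c1 c2 c3 apply linarith
      using ex d1 d2 c1 c2 c3 apply linarith
      by (simp_all add: algebra_simps)
  qed
  show ?thesis
    unfolding W1_def if_P[OF il] Hf L1 L2 L3 L4 L5 L6 L7 L8 Q hp_scale[of n q t "inverse X" la] hp_scale[of n q t "A * X" la] hp_scale[of n q t "q * B * X / t" mu] hp_scale[of n q t "q * B / (A * X * t)" mu] hp_scale[of n q t "inverse X" mu] hp_scale[of n q t "A * X" mu] hp_scale[of n q t "q * B * X" la] hp_scale[of n q t "q * B / (A * X)" la]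
    by (rule assemble[OF hp_nz[OF nz(1,2)] hp_nz[OF nz(1,2)] R]) (use nz in simp_all)
qed



lemma Wl_support:
  assumes "Wl n q p t a b zs nu (\<lambda>_. 0) \<noteq> 0" "length zs < i"
  shows "nu i = 0"
  using assms
proof (induction zs arbitrary: nu i)
  case Nil
  then have "nu = (\<lambda>_. 0)" by (simp split: if_splits)
  then show ?case by simp
next
  case (Cons z zs)
  from Cons.prems(1) have "(\<Sum>nu'\<in>{nu'. interlace n nu nu'}. W1 n q p t (a * t ^ (2 * length zs)) (b * t ^ length zs) nu nu' (z * t powi (- int (length zs)))
        * Wl n q p t a b zs nu' (\<lambda>_. 0)) \<noteq> 0" by simp
  then obtain nu' where "nu' \<in> {nu'. interlace n nu nu'}"
    and "W1 n q p t (a * t ^ (2 * length zs)) (b * t ^ length zs) nu nu' (z * t powi (- int (length zs)))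
        * Wl n q p t a b zs nu' (\<lambda>_. 0) \<noteq> 0"
    by (rule sum.not_neutral_contains_not_neutral)
  then have nu': "interlace n nu nu'" and w: "Wl n q p t a b zs nu' (\<lambda>_. 0) \<noteq> 0" by auto
  show ?case
  proof (cases "n < i")
    case True then show ?thesis using nu' unfolding interlace_def npart_def by auto
  next
    case False
    have A: "\<forall>j. 1 \<le> j \<and> j \<le> n \<longrightarrow> nu (Suc j) \<le> nu' j" using nu' by (simp add: interlace_def)
    have li: "Suc (length zs) < i" using Cons.prems(2) by simp
    have B: "1 \<le> i - 1 \<and> i - 1 \<le> n" using False li by arith
    have "nu (Suc (i - 1)) \<le> nu' (i - 1)" using A B by blast
    moreover have "nu' (i - 1) = 0" using Cons.IH[OF w] li by simp
    moreover have "Suc (i - 1) = i" using li by simp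
    ultimately show ?thesis by simp
  qed
qed

lemma reg: "x * y = z \<Longrightarrow> (x * w) * (y * v) = (z::complex) * (w * v)"
  by (simp add: ac_simps)

lemma mon_shift:
  assumes "t \<noteq> 0" "a \<noteq> 0" "b \<noteq> 0"
  shows "mon q t (a * t ^ k) (b * t ^ j) e1 e2 e3 e4 = mon q t a b e1 (e2 + int k * e3 + int j * e4) e3 e4"
  unfolding mon_def using assms
  by (simp add: power_int_mult_distrib power_int_power power_int_add ac_simps)

lemma main_ind:
  assumes p: "norm p < 1" and nz: "q \<noteq> 0" "t \<noteq> 0" "a \<noteq> 0" "b \<noteq> 0"
    and zs: "\<forall>x\<in>set zs. x \<noteq> 0" "length zs \<le> n"
  shows "Wl n (inverse q) p (inverse t) (inverse a) (inverse b) (map inverse zs) la (\<lambda>_. 0)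
    = mon q t a b (2 * int (\<Sum>i\<in>{1..n}. la i))
        (2 * int (\<Sum>i\<in>{1..n}. (i - 1) * la i) - 2 * (int (length zs) - 1) * int (\<Sum>i\<in>{1..n}. la i))
        (- 2 * int (\<Sum>i\<in>{1..n}. la i)) (2 * int (\<Sum>i\<in>{1..n}. la i))
      * Wl n q p t a b zs la (\<lambda>_. 0)"
  using zs
proof (induction zs arbitrary: la)
  case Nil
  show ?case
  proof (cases "la = (\<lambda>_. 0)")
    case True then show ?thesis by (simp add: mon_def)
  next
    case False then show ?thesis by simp
  qed
next
  case (Cons z zs)
  define l where "l = length zs"
  have znz: "z \<noteq> 0" using Cons.prems by simp
  have IH: "\<And>nu. Wl n (inverse q) p (inverse t) (inverse a) (inverse b) (map inverse zs) nu (\<lambda>_. 0)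
    = mon q t a b (2 * int (\<Sum>i\<in>{1..n}. nu i))
        (2 * int (\<Sum>i\<in>{1..n}. (i - 1) * nu i) - 2 * (int l - 1) * int (\<Sum>i\<in>{1..n}. nu i))
        (- 2 * int (\<Sum>i\<in>{1..n}. nu i)) (2 * int (\<Sum>i\<in>{1..n}. nu i))
      * Wl n q p t a b zs nu (\<lambda>_. 0)"
    using Cons.IH Cons.prems unfolding l_def by simp
  have ea: "inverse a * inverse t ^ (2 * l) = inverse (a * t ^ (2 * l))" by (simp add: power_inverse)
  have eb: "inverse b * inverse t ^ l = inverse (b * t ^ l)" by (simp add: power_inverse)
  have ex: "inverse z * inverse t powi (- int l) = inverse (z * t powi (- int l))" by (simp add: power_int_inverse)
  have Anz: "a * t ^ (2 * l) \<noteq> 0" "b * t ^ l \<noteq> 0" "z * t powi (- int l) \<noteq> 0" using nz znz by auto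
  show ?case
    unfolding list.map Wl.simps length_map length_Cons l_def[symmetric] ea eb ex sum_distrib_left
  proof (intro sum.cong refl)
    fix nu assume "nu \<in> {nu. interlace n la nu}"
    show "W1 n (inverse q) p (inverse t) (inverse (a * t ^ (2 * l))) (inverse (b * t ^ l)) la nu (inverse (z * t powi - int l))
          * Wl n (inverse q) p (inverse t) (inverse a) (inverse b) (map inverse zs) nu (\<lambda>_. 0)
        = mon q t a b (2 * int (\<Sum>i\<in>{1..n}. la i))
            (2 * int (\<Sum>i\<in>{1..n}. (i - 1) * la i) - 2 * (int (Suc l) - 1) * int (\<Sum>i\<in>{1..n}. la i))
            (- 2 * int (\<Sum>i\<in>{1..n}. la i)) (2 * int (\<Sum>i\<in>{1..n}. la i))
          * (W1 n q p t (a * t ^ (2 * l)) (b * t ^ l) la nu (z * t powi - int l) * Wl n q p t a b zs nu (\<lambda>_. 0))"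
    proof (cases "Wl n q p t a b zs nu (\<lambda>_. 0) = 0")
      case True then show ?thesis unfolding IH by simp
    next
      case False
      have "l < n" using Cons.prems unfolding l_def by simp
      then have nun: "nu n = 0" using Wl_support[OF False] unfolding l_def by simp
      show ?thesis
        unfolding IH W1_inv[where n=n and mu=nu, OF p nz(1,2) Anz nun] mon_shift[OF nz(2-4)]
        apply (rule reg)
        unfolding mon_mult[OF nz(1-4)]
        by (rule mon_cong) (simp_all add: algebra_simps)
    qed
  qed
qed


theorem mainTheorem9:
  fixes n :: nat and la :: "nat \<Rightarrow> nat" and xs :: "complex list"
    and p q t a b :: complex
  assumes "norm p < 1"
    and "generic p q t a b xs"
    and "npart n la"
    and "length xs = n"
  shows "Wl n (inverse q) p (inverse t) (inverse a) (inverse b) (map inverse xs) la (\<lambda>_. 0)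
         = a powi (- 2 * int (\<Sum>i\<in>{1..n}. la i)) * b ^ (2 * (\<Sum>i\<in>{1..n}. la i))
           * q ^ (2 * (\<Sum>i\<in>{1..n}. la i))
           * t powi (2 * int (\<Sum>i\<in>{1..n}. (i - 1) * la i) - 2 * (int n - 1) * int (\<Sum>i\<in>{1..n}. la i))
           * Wl n q p t a b xs la (\<lambda>_. 0)"
proof -
  have g: "q \<noteq> 0" "t \<noteq> 0" "a \<noteq> 0" "b \<noteq> 0" "\<forall>x\<in>set xs. x \<noteq> 0"
    using assms(2) unfolding generic_def by auto
  have "Wl n (inverse q) p (inverse t) (inverse a) (inverse b) (map inverse xs) la (\<lambda>_. 0)
    = mon q t a b (2 * int (\<Sum>i\<in>{1..n}. la i))
        (2 * int (\<Sum>i\<in>{1..n}. (i - 1) * la i) - 2 * (int (length xs) - 1) * int (\<Sum>i\<in>{1..n}. la i))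
        (- 2 * int (\<Sum>i\<in>{1..n}. la i)) (2 * int (\<Sum>i\<in>{1..n}. la i))
      * Wl n q p t a b xs la (\<lambda>_. 0)"
    using main_ind[OF assms(1) g(1-4) g(5)] assms(4) by simp
  also have "mon q t a b (2 * int (\<Sum>i\<in>{1..n}. la i))
        (2 * int (\<Sum>i\<in>{1..n}. (i - 1) * la i) - 2 * (int (length xs) - 1) * int (\<Sum>i\<in>{1..n}. la i))
        (- 2 * int (\<Sum>i\<in>{1..n}. la i)) (2 * int (\<Sum>i\<in>{1..n}. la i))
      = a powi (- 2 * int (\<Sum>i\<in>{1..n}. la i)) * b ^ (2 * (\<Sum>i\<in>{1..n}. la i))
           * q ^ (2 * (\<Sum>i\<in>{1..n}. la i))
           * t powi (2 * int (\<Sum>i\<in>{1..n}. (i - 1) * la i) - 2 * (int n - 1) * int (\<Sum>i\<in>{1..n}. la i))"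
  proof -
    have "\<And>x::complex. x powi (2 * int (\<Sum>i\<in>{1..n}. la i)) = x ^ (2 * (\<Sum>i\<in>{1..n}. la i))"
      by (metis of_nat_mult of_nat_numeral power_int_of_nat)
    then show ?thesis unfolding mon_def assms(4) by (simp only: ac_simps)
  qed
  finally show ?thesis .
qed

end
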